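(* Let $S=\{(X_m,y_m)\}_{m=1}^T\in\mathcal{S}_T$ be fitted in the cyclic ordering, let $n\ge1$, $k=nT$, and define the end-of-cycle average iterate $\bar w_n=\frac1n\sum_{n'=1}^n w_{Tn'}$. Then $$\frac1T\sum_{m=1}^T\|X_m\bar w_n-y_m\|^2\le\frac{T-1}{2n}\le\frac{T^2}{2k}.$$
   Context: Let $d\ge 1$, $T\ge1$. A task is a pair $(X_m,y_m)$ with $X_m\in\mathbb{R}^{n_m\times d}$, $y_m\in\mathbb{R}^{n_m}$ and $\operatorname{rank}(X_m)<d$. $\mathcal{S}_T$ denotes the set of collections $S=\{(X_m,y_m)\}_{m=1}^T$ of $T$ tasks such that $\|X_m\|\le 1$ (spectral norm) for all $m$ and there exists $w\in\mathbb{R}^d$ with $\|w\|\le 1$ and $y_m=X_mw$ for all $m$. Given $S$ and an ordering $\tau:\mathbb{N}^+\to\{1,\dots,T\}$, the iterates are $w_0=0$ and $w_t=w_{t-1}+X_{\tau(t)}^+(y_{\tau(t)}-X_{\tau(t)}w_{t-1})$, with $A^+$ the Moore–Penrose pseudoinverse. The cyclic ordering is $\tau(t)=((t-1)\bmod T)+1$. *)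

theory Defs
  imports "Jordan_Normal_Form.DL_Rank"
begin

definition vnorm :: "real vec \<Rightarrow> real" where
  "vnorm v = sqrt (v \<bullet> v)"

definition spec_norm :: "real mat \<Rightarrow> real" where
  "spec_norm A = Sup {vnorm (A *\<^sub>v v) | v. v \<in> carrier_vec (dim_col A) \<and> vnorm v \<le> 1}"

definition pinv :: "real mat \<Rightarrow> real mat" where
  "pinv A = (THE B. B \<in> carrier_mat (dim_col A) (dim_row A) \<and>
      A * B * A = A \<and> B * A * B = B \<and>
      transpose_mat (A * B) = A * B \<and> transpose_mat (B * A) = B * A)"

definition mrank :: "real mat \<Rightarrow> nat" where
  "mrank A = vec_space.rank (dim_row A) A"

definition is_task :: "nat \<Rightarrow> real mat \<Rightarrow> real vec \<Rightarrow> bool" where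
  "is_task d X y \<longleftrightarrow> dim_col X = d \<and> y \<in> carrier_vec (dim_row X) \<and> mrank X < d"

definition in_S :: "nat \<Rightarrow> nat \<Rightarrow> (nat \<Rightarrow> real mat) \<Rightarrow> (nat \<Rightarrow> real vec) \<Rightarrow> bool" where
  "in_S d T Xs ys \<longleftrightarrow>
     (\<forall>m\<in>{1..T}. is_task d (Xs m) (ys m) \<and> spec_norm (Xs m) \<le> 1) \<and>
     (\<exists>w \<in> carrier_vec d. vnorm w \<le> 1 \<and> (\<forall>m\<in>{1..T}. ys m = Xs m *\<^sub>v w))"

definition cyclic :: "nat \<Rightarrow> nat \<Rightarrow> nat" where
  "cyclic T t = ((t - 1) mod T) + 1"

fun iterate :: "nat \<Rightarrow> (nat \<Rightarrow> nat) \<Rightarrow> (nat \<Rightarrow> real mat) \<Rightarrow> (nat \<Rightarrow> real vec) \<Rightarrow> nat \<Rightarrow> real vec" where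
  "iterate d \<tau> Xs ys 0 = 0\<^sub>v d"
| "iterate d \<tau> Xs ys (Suc t) =
     iterate d \<tau> Xs ys t + pinv (Xs (\<tau> (Suc t))) *\<^sub>v (ys (\<tau> (Suc t)) - Xs (\<tau> (Suc t)) *\<^sub>v iterate d \<tau> Xs ys t)"

definition avg_iterate :: "nat \<Rightarrow> nat \<Rightarrow> (nat \<Rightarrow> real mat) \<Rightarrow> (nat \<Rightarrow> real vec) \<Rightarrow> nat \<Rightarrow> real vec" where
  "avg_iterate d T Xs ys n =
     vec d (\<lambda>i. (1 / real n) * (\<Sum>n'=1..n. iterate d (cyclic T) Xs ys (T * n') $ i))"

end

theory Submission
  imports Defs
begin


lemma ginv_exists:
  fixes A :: "real mat"
  assumes A: "A \<in> carrier_mat nr nc"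
  shows "\<exists>F \<in> carrier_mat nc nr. A * F * A = A"
proof -
  define C where "C = gauss_jordan_single A"
  note gj = gauss_jordan_single[OF A C_def[symmetric]]
  from gj(4) obtain P Q where C: "C = P * A" and P: "P \<in> carrier_mat nr nr" and Q: "Q \<in> carrier_mat nr nr"
    and PQ: "P * Q = 1\<^sub>m nr" and QP: "Q * P = 1\<^sub>m nr" by blast
  have Cc: "C \<in> carrier_mat nr nc" by (rule gj(2))
  from gj(3) obtain f where pf: "pivot_fun C f nc" unfolding row_echelon_form_def using Cc by auto
  have dr: "dim_row C = nr" using Cc by auto
  note pv = pivot_funD[OF dr pf]
  define R :: "real mat" where "R = mat nc nr (\<lambda>(j,i). if f i < nc \<and> j = f i then 1 else 0)"
  have Rc: "R \<in> carrier_mat nc nr" unfolding R_def by auto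
  have CR: "(C * R) $$ (i', i) = (if f i < nc \<and> i' = i then 1 else 0)" if "i' < nr" "i < nr" for i' i
  proof -
    have "(C * R) $$ (i', i) = (\<Sum>j = 0..<nc. C $$ (i', j) * (if f i < nc \<and> j = f i then 1 else 0))"
      using that Cc Rc unfolding R_def by (auto simp: scalar_prod_def)
    also have "\<dots> = (if f i < nc then C $$ (i', f i) else 0)"
      by (auto simp: if_distrib cong: if_cong)
    also have "\<dots> = (if f i < nc \<and> i' = i then 1 else 0)"
      using pv(4)[OF that(2)] pv(5)[OF that(2) _ that(1)] by auto
    finally show ?thesis .
  qed
  have CRC: "C * R * C = C"
  proof (rule eq_matI)
    fix i' k assume i': "i' < dim_row C" and k: "k < dim_col C"
    have "(C * R * C) $$ (i', k) = (\<Sum>i = 0..<nr. (C * R) $$ (i', i) * C $$ (i, k))"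
      using i' k Cc Rc by (subst index_mult_mat(1)) (auto simp: scalar_prod_def simp del: assoc_mult_mat)
    also have "\<dots> = (\<Sum>i = 0..<nr. (if f i < nc \<and> i' = i then 1 else 0) * C $$ (i, k))"
      using i' dr by (intro sum.cong) (auto simp: CR)
    also have "\<dots> = (\<Sum>i = 0..<nr. if i = i' then (if f i' < nc then C $$ (i', k) else 0) else 0)"
      by (intro sum.cong) auto
    also have "\<dots> = (if f i' < nc then C $$ (i', k) else 0)"
      using i' dr by simp
    also have "\<dots> = C $$ (i', k)"
    proof (cases "f i' < nc")
      case False
      then have "f i' = nc" using pv(1)[of i'] i' dr by simp
      then show ?thesis using pv(2)[of i' k] i' k dr Cc False by simp
    qed simp
    finally show "(C * R * C) $$ (i', k) = C $$ (i', k)" .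
  qed (use Cc Rc in auto)
  have AQC: "A = Q * C"
    using C Q P A QP by (metis assoc_mult_mat left_mult_one_mat)
  have RPc: "R * P \<in> carrier_mat nc nr" using Rc P by auto
  have CRc: "C * R \<in> carrier_mat nr nr" using Rc Cc by auto
  have CRPc: "C * (R * P) \<in> carrier_mat nr nr" using RPc Cc by auto
  have e0: "C * (R * P) * A = C"
    using assoc_mult_mat[OF Cc Rc P, symmetric] assoc_mult_mat[OF CRc P A] C CRC by simp
  have e1: "A * (R*P) = Q * (C * (R*P))" using AQC assoc_mult_mat[OF Q Cc RPc] by simp
  have "A * (R * P) * A = Q * (C * (R*P) * A)" unfolding e1 using assoc_mult_mat[OF Q CRPc A] .
  then have "A * (R * P) * A = A" using e0 AQC by simp
  moreover have "R * P \<in> carrier_mat nc nr" using Rc P by auto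
  ultimately show ?thesis by blast
qed


lemma gram_eq:
  fixes X A :: "real mat"
  assumes X: "X \<in> carrier_mat r c" and A: "A \<in> carrier_mat r c"
    and e1: "transpose_mat X * X = transpose_mat A * A" and e2: "transpose_mat X * A = transpose_mat A * A"
  shows "X = A"
proof (rule eq_matI)
  fix i j assume i: "i < dim_row A" and j: "j < dim_col A"
  have ent: "(transpose_mat P * Q) $$ (j, j) = (\<Sum>k = 0..<r. P $$ (k, j) * Q $$ (k, j))"
    if "P \<in> carrier_mat r c" "Q \<in> carrier_mat r c" for P Q :: "real mat"
    using that j A by (auto simp: scalar_prod_def)
  have "(\<Sum>k = 0..<r. (X $$ (k, j) - A $$ (k, j))^2)
      = (\<Sum>k = 0..<r. X $$ (k, j) * X $$ (k, j)) - 2 * (\<Sum>k = 0..<r. X $$ (k, j) * A $$ (k, j))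
        + (\<Sum>k = 0..<r. A $$ (k, j) * A $$ (k, j))"
    by (simp add: power2_eq_square algebra_simps sum.distrib sum_subtractf sum_distrib_left)
  also have "\<dots> = 0" using ent[OF X X] ent[OF X A] ent[OF A A] e1 e2 by simp
  finally have "(\<Sum>k = 0..<r. (X $$ (k, j) - A $$ (k, j))^2) = 0" .
  then have "\<forall>k\<in>{0..<r}. (X $$ (k, j) - A $$ (k, j))^2 = 0"
    by (subst sum_nonneg_eq_0_iff[symmetric]) auto
  then show "X $$ (i, j) = A $$ (i, j)" using i A by auto
qed (use X A in auto)

lemma sym_ginv:
  fixes M :: "real mat"
  assumes M: "M \<in> carrier_mat n n" and sM: "transpose_mat M = M"
  shows "\<exists>G \<in> carrier_mat n n. transpose_mat G = G \<and> M * G * M = M"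
proof -
  obtain F where F: "F \<in> carrier_mat n n" and MFM: "M * F * M = M" using ginv_exists[OF M] by blast
  have Ft: "transpose_mat F \<in> carrier_mat n n" using F by simp
  have MF: "M * F \<in> carrier_mat n n" using M F by simp
  have MFtM: "M * transpose_mat F * M = M"
  proof -
    have "M = transpose_mat (M * F * M)" using MFM sM by simp
    also have "\<dots> = transpose_mat M * transpose_mat (M * F)" using transpose_mult[OF MF M] by simp
    also have "\<dots> = M * (transpose_mat F * M)" using transpose_mult[OF M F] sM by simp
    also have "\<dots> = M * transpose_mat F * M" using assoc_mult_mat[OF M Ft M] by simp
    finally show ?thesis by simp
  qed
  define G where "G = F * M * transpose_mat F"
  have G: "G \<in> carrier_mat n n" unfolding G_def using F M by simp
  have "transpose_mat G = F * transpose_mat (F * M)"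
    unfolding G_def using transpose_mult[OF _ Ft, of "F * M" n] F M by simp
  also have "\<dots> = F * (M * transpose_mat F)" using transpose_mult[OF F M] sM by simp
  also have "\<dots> = G" unfolding G_def using assoc_mult_mat[OF F M Ft] by simp
  finally have sG: "transpose_mat G = G" .
  have "M * G * M = M * (F * (M * transpose_mat F)) * M"
    unfolding G_def using assoc_mult_mat[OF F M Ft] by simp
  also have "M * (F * (M * transpose_mat F)) = M * F * M * transpose_mat F"
    using assoc_mult_mat[OF M F, of "M * transpose_mat F" n] assoc_mult_mat[OF MF M Ft] M Ft by simp
  also have "\<dots> = M * transpose_mat F" using MFM by simp
  also have "\<dots> * M = M" using MFtM .
  finally show ?thesis using G sG by blast
qed

lemma AGM:
  fixes A G :: "real mat"
  assumes A: "A \<in> carrier_mat r c" and G: "G \<in> carrier_mat c c" and sG: "transpose_mat G = G"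
    and MGM: "(transpose_mat A * A) * G * (transpose_mat A * A) = transpose_mat A * A"
  shows "A * G * (transpose_mat A * A) = A"
proof -
  define M where "M = transpose_mat A * A"
  have At: "transpose_mat A \<in> carrier_mat c r" using A by simp
  have M: "M \<in> carrier_mat c c" unfolding M_def using A by simp
  have sM: "transpose_mat M = M" unfolding M_def using transpose_mult[OF At A] by simp
  have MGM': "M * G * M = M" using MGM unfolding M_def .
  have AG: "A * G \<in> carrier_mat r c" using A G by simp
  have MG: "M * G \<in> carrier_mat c c" using M G by simp
  define X where "X = A * G * M"
  have X: "X \<in> carrier_mat r c" unfolding X_def using A G M by simp
  have Xt: "transpose_mat X = M * G * transpose_mat A"
  proof -
    have "transpose_mat X = M * transpose_mat (A * G)" unfolding X_def using transpose_mult[OF AG M] sM by simp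
    also have "\<dots> = M * (G * transpose_mat A)" using transpose_mult[OF A G] sG by simp
    also have "\<dots> = M * G * transpose_mat A" using assoc_mult_mat[OF M G At] by simp
    finally show ?thesis .
  qed
  have e2: "transpose_mat X * A = M"
  proof -
    have "transpose_mat X * A = M * G * (transpose_mat A * A)" unfolding Xt using assoc_mult_mat[OF MG At A] .
    then show ?thesis using MGM' unfolding M_def by simp
  qed
  have e1: "transpose_mat X * X = M"
  proof -
    have "transpose_mat X * X = transpose_mat X * (A * (G * M))" unfolding X_def using assoc_mult_mat[OF A G M] by simp
    also have "\<dots> = transpose_mat X * A * (G * M)"
      using assoc_mult_mat[OF _ A, of "transpose_mat X" c "G * M" c] X G M by simp
    also have "\<dots> = M * G * M" using e2 assoc_mult_mat[OF M G M] by simp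
    finally show ?thesis using MGM' by simp
  qed
  have "X = A" using gram_eq[OF X A] e1 e2 unfolding M_def by simp
  then show ?thesis unfolding X_def M_def .
qed
lemma mp_unique:
  fixes A B C :: "real mat"
  assumes A: "A \<in> carrier_mat r c" and B: "B \<in> carrier_mat c r" and C: "C \<in> carrier_mat c r"
    and b1: "A * B * A = A" and b2: "B * A * B = B" and b3: "transpose_mat (A * B) = A * B" and b4: "transpose_mat (B * A) = B * A"
    and c1: "A * C * A = A" and c2: "C * A * C = C" and c3: "transpose_mat (A * C) = A * C" and c4: "transpose_mat (C * A) = C * A"
  shows "B = C"
proof -
  have At: "transpose_mat A \<in> carrier_mat c r" using A by simp
  have Bt: "transpose_mat B \<in> carrier_mat r c" using B by simp
  have Ct: "transpose_mat C \<in> carrier_mat r c" using C by simp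
  have AB: "A * B \<in> carrier_mat r r" using A B by simp
  have AC: "A * C \<in> carrier_mat r r" using A C by simp
  have BA: "B * A \<in> carrier_mat c c" using A B by simp
  have CA: "C * A \<in> carrier_mat c c" using A C by simp
  have tAB: "A * B = transpose_mat B * transpose_mat A" using b3 transpose_mult[OF A B] by simp
  have tAC: "A * C = transpose_mat C * transpose_mat A" using c3 transpose_mult[OF A C] by simp
  have tBA: "B * A = transpose_mat A * transpose_mat B" using b4 transpose_mult[OF B A] by simp
  have tCA: "C * A = transpose_mat A * transpose_mat C" using c4 transpose_mult[OF C A] by simp
  have At_eq: "transpose_mat A = transpose_mat A * transpose_mat C * transpose_mat A"
  proof -
    have "transpose_mat A = transpose_mat (A * C * A)" using c1 by simp
    also have "\<dots> = transpose_mat A * transpose_mat (A * C)" using transpose_mult[OF AC A] by simp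
    also have "\<dots> = transpose_mat A * (transpose_mat C * transpose_mat A)" using transpose_mult[OF A C] by simp
    also have "\<dots> = transpose_mat A * transpose_mat C * transpose_mat A" using assoc_mult_mat[OF At Ct At] by simp
    finally show ?thesis .
  qed
  have At_eq2: "transpose_mat A = transpose_mat A * transpose_mat B * transpose_mat A"
  proof -
    have "transpose_mat A = transpose_mat (A * B * A)" using b1 by simp
    also have "\<dots> = transpose_mat A * transpose_mat (A * B)" using transpose_mult[OF AB A] by simp
    also have "\<dots> = transpose_mat A * (transpose_mat B * transpose_mat A)" using transpose_mult[OF A B] by simp
    also have "\<dots> = transpose_mat A * transpose_mat B * transpose_mat A" using assoc_mult_mat[OF At Bt At] by simp
    finally show ?thesis .
  qed
  have "B = B * (A * B)" using b2 assoc_mult_mat[OF B A B] by simp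
  also have "\<dots> = B * (transpose_mat B * transpose_mat A)" using tAB by simp
  also have "transpose_mat B * transpose_mat A = transpose_mat B * (transpose_mat A * transpose_mat C * transpose_mat A)"
    by (simp only: At_eq[symmetric])
  also have "\<dots> = (transpose_mat B * transpose_mat A) * (transpose_mat C * transpose_mat A)"
    using assoc_mult_mat[OF At Ct At] assoc_mult_mat[OF Bt At, of "transpose_mat C * transpose_mat A" r] Ct At
    by simp
  also have "\<dots> = (A * B) * (A * C)" using tAB tAC by simp
  also have "B * \<dots> = (B * A * B) * (A * C)" using assoc_mult_mat[OF B AB AC] assoc_mult_mat[OF B A B] by simp
  also have "\<dots> = B * A * C" using b2 assoc_mult_mat[OF B A C] by simp
  finally have eB: "B = B * A * C" .
  have "C = (C * A) * C" using c2 by simp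
  also have "\<dots> = transpose_mat A * transpose_mat C * C" using tCA by simp
  also have "\<dots> = (transpose_mat A * transpose_mat B * transpose_mat A) * transpose_mat C * C"
    by (simp only: At_eq2[symmetric])
  also have "\<dots> = (transpose_mat A * transpose_mat B) * (transpose_mat A * transpose_mat C) * C"
    using assoc_mult_mat[OF _ At Ct, of "transpose_mat A * transpose_mat B" c] At Bt
    by simp
  also have "\<dots> = (B * A) * (C * A) * C" using tBA tCA by simp
  also have "\<dots> = B * A * (C * A * C)" using assoc_mult_mat[OF BA CA C] by simp
  also have "\<dots> = B * A * C" using c2 by simp
  finally show ?thesis using eB by simp
qed

lemma mp_exists:
  fixes A :: "real mat"
  assumes A: "A \<in> carrier_mat r c"
  shows "\<exists>B. B \<in> carrier_mat c r \<and> A * B * A = A \<and> B * A * B = B \<and>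
      transpose_mat (A * B) = A * B \<and> transpose_mat (B * A) = B * A"
proof -
  have At: "transpose_mat A \<in> carrier_mat c r" using A by simp
  define M where "M = transpose_mat A * A"
  define N where "N = A * transpose_mat A"
  have M: "M \<in> carrier_mat c c" unfolding M_def using A by simp
  have N: "N \<in> carrier_mat r r" unfolding N_def using A by simp
  have sM: "transpose_mat M = M" unfolding M_def using transpose_mult[OF At A] by simp
  have sN: "transpose_mat N = N" unfolding N_def using transpose_mult[OF A At] by simp
  obtain G where G: "G \<in> carrier_mat c c" and sG: "transpose_mat G = G" and MGM: "M * G * M = M"
    using sym_ginv[OF M sM] by blast
  obtain H where H: "H \<in> carrier_mat r r" and sH: "transpose_mat H = H" and NHN: "N * H * N = N"
    using sym_ginv[OF N sN] by blast
  have f1: "A * G * M = A" using AGM[OF A G sG] MGM unfolding M_def by simp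
  have f2: "transpose_mat A * H * N = transpose_mat A"
    using AGM[OF At H sH] NHN unfolding N_def by simp
  have AG: "A * G \<in> carrier_mat r c" using A G by simp
  have AtH: "transpose_mat A * H \<in> carrier_mat c r" using At H by simp
  have HA: "H * A \<in> carrier_mat r c" using H A by simp
  have GAt: "G * transpose_mat A \<in> carrier_mat c r" using G At by simp
  have f2': "N * H * A = A"
  proof -
    have "A = transpose_mat (transpose_mat A * H * N)" using f2 by simp
    also have "\<dots> = N * transpose_mat (transpose_mat A * H)" using transpose_mult[OF AtH N] sN by simp
    also have "\<dots> = N * (H * A)" using transpose_mult[OF At H] sH by simp
    also have "\<dots> = N * H * A" using assoc_mult_mat[OF N H A] by simp
    finally show ?thesis by simp
  qed
  define K where "K = transpose_mat A * H * A"
  define L where "L = A * G * transpose_mat A"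
  have K: "K \<in> carrier_mat c c" unfolding K_def using At H A by simp
  have L: "L \<in> carrier_mat r r" unfolding L_def using At G A by simp
  define B where "B = K * G * transpose_mat A"
  have B: "B \<in> carrier_mat c r" unfolding B_def using K G At by simp
  have sK: "transpose_mat K = K"
  proof -
    have "transpose_mat K = transpose_mat A * transpose_mat (transpose_mat A * H)"
      unfolding K_def using transpose_mult[OF AtH A] by simp
    also have "\<dots> = transpose_mat A * (H * A)" using transpose_mult[OF At H] sH by simp
    finally show ?thesis unfolding K_def using assoc_mult_mat[OF At H A] by simp
  qed
  have sL: "transpose_mat L = L"
  proof -
    have "transpose_mat L = A * transpose_mat (A * G)"
      unfolding L_def using transpose_mult[OF AG At] by simp
    also have "\<dots> = A * (G * transpose_mat A)" using transpose_mult[OF A G] sG by simp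
    finally show ?thesis unfolding L_def using assoc_mult_mat[OF A G At] by simp
  qed
  have AB: "A * B = L"
  proof -
    have "A * B = A * (K * (G * transpose_mat A))" unfolding B_def using assoc_mult_mat[OF K G At] by simp
    also have "\<dots> = A * K * (G * transpose_mat A)" using assoc_mult_mat[OF A K GAt] by simp
    also have "A * K = N * H * A"
      unfolding K_def N_def using assoc_mult_mat[OF A At H] assoc_mult_mat[OF A AtH A] by simp
    also have "\<dots> = A" by (rule f2')
    finally show ?thesis unfolding L_def using assoc_mult_mat[OF A G At] by simp
  qed
  have BA: "B * A = K"
  proof -
    have "B * A = K * (G * transpose_mat A) * A" unfolding B_def using assoc_mult_mat[OF K G At] by simp
    also have "\<dots> = K * (G * M)" unfolding M_def using assoc_mult_mat[OF K GAt A] assoc_mult_mat[OF G At A] by simp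
    also have "\<dots> = transpose_mat A * H * (A * (G * M))"
      unfolding K_def using assoc_mult_mat[OF AtH A, of "G * M" c] G M by simp
    also have "A * (G * M) = A" using f1 assoc_mult_mat[OF A G M] by simp
    finally show ?thesis unfolding K_def .
  qed
  have ABA: "A * B * A = A"
  proof -
    have "A * B * A = A * G * (transpose_mat A * A)" unfolding AB L_def using assoc_mult_mat[OF AG At A] .
    then show ?thesis using f1 unfolding M_def by simp
  qed
  have BAB: "B * A * B = B"
  proof -
    have "B * A * B = K * B" using BA by simp
    also have "\<dots> = transpose_mat A * H * A * (K * G * transpose_mat A)" unfolding B_def K_def by simp
    also have "\<dots> = transpose_mat A * H * (A * K) * (G * transpose_mat A)"
    proof -
      have KGAt: "K * G * transpose_mat A \<in> carrier_mat c r" using K G At by simp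
      have AK: "A * K \<in> carrier_mat r c" using A K by simp
      have "A * (K * G * transpose_mat A) = (A * K) * (G * transpose_mat A)"
        using assoc_mult_mat[OF K G At] assoc_mult_mat[OF A K GAt] by simp
      then show ?thesis using assoc_mult_mat[OF AtH A KGAt] assoc_mult_mat[OF AtH AK GAt] by simp
    qed
    also have "A * K = N * H * A"
      unfolding K_def N_def using assoc_mult_mat[OF A At H] assoc_mult_mat[OF A AtH A] by simp
    also have "\<dots> = A" by (rule f2')
    also have "transpose_mat A * H * A * (G * transpose_mat A) = B"
      unfolding B_def K_def using assoc_mult_mat[OF _ G At, of "transpose_mat A * H * A" c] At H A by simp
    finally show ?thesis .
  qed
  show ?thesis using B ABA BAB AB BA sK sL by auto
qed

lemma pinv_props:
  fixes A :: "real mat"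
  assumes A: "A \<in> carrier_mat r c"
  shows "pinv A \<in> carrier_mat c r" "A * pinv A * A = A" "pinv A * A * pinv A = pinv A"
    "transpose_mat (A * pinv A) = A * pinv A" "transpose_mat (pinv A * A) = pinv A * A"
proof -
  let ?P = "\<lambda>B. B \<in> carrier_mat (dim_col A) (dim_row A) \<and>
      A * B * A = A \<and> B * A * B = B \<and>
      transpose_mat (A * B) = A * B \<and> transpose_mat (B * A) = B * A"
  have dims: "dim_col A = c" "dim_row A = r" using A by auto
  have "\<exists>!B. ?P B"
  proof (rule ex_ex1I)
    show "\<exists>B. ?P B" using mp_exists[OF A] unfolding dims .
  next
    fix B C assume "?P B" "?P C"
    then show "B = C" using mp_unique[OF A] unfolding dims by blast
  qed
  then have "?P (pinv A)" unfolding pinv_def by (rule theI')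
  then show "pinv A \<in> carrier_mat c r" "A * pinv A * A = A" "pinv A * A * pinv A = pinv A"
    "transpose_mat (A * pinv A) = A * pinv A" "transpose_mat (pinv A * A) = pinv A * A"
    unfolding dims by auto
qed



lemma sprod_self_nonneg: "0 \<le> (v :: real vec) \<bullet> v"
  unfolding scalar_prod_def by (intro sum_nonneg) auto

lemma vnorm_sq: "(vnorm v)^2 = v \<bullet> v"
  unfolding vnorm_def using sprod_self_nonneg by simp

lemma vnorm_nonneg: "0 \<le> vnorm v"
  unfolding vnorm_def using sprod_self_nonneg by simp

lemma sq_sum_le:
  fixes a :: "'b \<Rightarrow> real"
  assumes "finite J"
  shows "(\<Sum>j\<in>J. a j)^2 \<le> real (card J) * (\<Sum>j\<in>J. (a j)^2)"
proof -
  have "0 \<le> (\<Sum>i\<in>J. \<Sum>j\<in>J. (a i - a j)^2)" by (intro sum_nonneg) auto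
  also have "\<dots> = (\<Sum>i\<in>J. \<Sum>j\<in>J. (a i)^2 + (a j)^2 - 2 * (a i * a j))"
    by (simp add: power2_eq_square algebra_simps)
  also have "\<dots> = (\<Sum>i\<in>J. real (card J) * (a i)^2 + (\<Sum>j\<in>J. (a j)^2) - 2 * a i * (\<Sum>j\<in>J. a j))"
  proof (intro sum.cong refl)
    fix i
    have "(\<Sum>j\<in>J. (a i)^2 + (a j)^2 - 2 * (a i * a j)) = (\<Sum>j\<in>J. (a i)^2) + (\<Sum>j\<in>J. (a j)^2) - (\<Sum>j\<in>J. 2 * a i * a j)"
      by (simp add: sum.distrib sum_subtractf mult.assoc)
    also have "(\<Sum>j\<in>J. 2 * a i * a j) = 2 * a i * (\<Sum>j\<in>J. a j)" by (simp add: sum_distrib_left)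
    finally show "(\<Sum>j\<in>J. (a i)^2 + (a j)^2 - 2 * (a i * a j)) = real (card J) * (a i)^2 + (\<Sum>j\<in>J. (a j)^2) - 2 * a i * (\<Sum>j\<in>J. a j)"
      by simp
  qed
  also have "\<dots> = real (card J) * (\<Sum>j\<in>J. (a j)^2) + real (card J) * (\<Sum>j\<in>J. (a j)^2) - 2 * (\<Sum>j\<in>J. a j) * (\<Sum>j\<in>J. a j)"
    by (simp add: sum.distrib sum_subtractf sum_distrib_left[symmetric] sum_distrib_right[symmetric])
  also have "\<dots> = 2 * (real (card J) * (\<Sum>j\<in>J. (a j)^2)) - 2 * (\<Sum>j\<in>J. a j)^2"
    by (simp add: power2_eq_square)
  finally show ?thesis by simp
qed

lemma vec_sum_sq:
  fixes u :: "real vec" and v :: "'b \<Rightarrow> real vec"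
  assumes J: "finite J" and u: "u \<in> carrier_vec r" and v: "\<And>j. j \<in> J \<Longrightarrow> v j \<in> carrier_vec r"
    and ent: "\<And>k. k < r \<Longrightarrow> u $ k = c * (\<Sum>j\<in>J. v j $ k)"
  shows "(vnorm u)^2 \<le> c^2 * real (card J) * (\<Sum>j\<in>J. (vnorm (v j))^2)"
proof -
  have "(vnorm u)^2 = (\<Sum>k = 0..<r. (u $ k)^2)"
    unfolding vnorm_sq scalar_prod_def using u by (simp add: power2_eq_square)
  also have "\<dots> = (\<Sum>k = 0..<r. c^2 * (\<Sum>j\<in>J. v j $ k)^2)"
    by (intro sum.cong) (auto simp: ent power_mult_distrib)
  also have "\<dots> \<le> (\<Sum>k = 0..<r. c^2 * (real (card J) * (\<Sum>j\<in>J. (v j $ k)^2)))"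
    by (intro sum_mono mult_left_mono sq_sum_le J) auto
  also have "\<dots> = c^2 * real (card J) * (\<Sum>j\<in>J. \<Sum>k = 0..<r. (v j $ k)^2)"
    by (simp add: sum_distrib_left sum.swap[of _ J] mult.assoc)
  also have "(\<Sum>j\<in>J. \<Sum>k = 0..<r. (v j $ k)^2) = (\<Sum>j\<in>J. (vnorm (v j))^2)"
  proof (intro sum.cong refl)
    fix j assume "j \<in> J"
    then show "(\<Sum>k = 0..<r. (v j $ k)^2) = (vnorm (v j))^2"
      unfolding vnorm_sq scalar_prod_def using v[of j] by (simp add: power2_eq_square)
  qed
  finally show ?thesis .
qed

lemma adj:
  fixes A :: "real mat"
  assumes A: "A \<in> carrier_mat r c" and u: "u \<in> carrier_vec c" and v: "v \<in> carrier_vec r"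
  shows "(A *\<^sub>v u) \<bullet> v = u \<bullet> (transpose_mat A *\<^sub>v v)"
proof -
  have "(A *\<^sub>v u) \<bullet> v = (\<Sum>i = 0..<r. (\<Sum>j = 0..<c. A $$ (i, j) * u $ j) * v $ i)"
    using A u v by (auto simp: scalar_prod_def)
  also have "\<dots> = (\<Sum>j = 0..<c. u $ j * (\<Sum>i = 0..<r. A $$ (i, j) * v $ i))"
    by (simp add: sum_distrib_left sum_distrib_right sum.swap[of _ "{0..<r}"] algebra_simps)
  also have "\<dots> = u \<bullet> (transpose_mat A *\<^sub>v v)"
    using A u v by (auto simp: scalar_prod_def)
  finally show ?thesis .
qed

lemma vnorm_abs_entry:
  assumes "v \<in> carrier_vec n" "j < n"
  shows "\<bar>v $ j\<bar> \<le> vnorm v"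
proof -
  have "(v $ j)^2 \<le> (\<Sum>i = 0..<n. (v $ i)^2)"
    using assms by (intro member_le_sum) auto
  then have "(v $ j)^2 \<le> v \<bullet> v" using assms by (simp add: scalar_prod_def power2_eq_square)
  then show ?thesis unfolding vnorm_def by (metis real_sqrt_abs real_sqrt_le_mono)
qed

lemma vnorm_smult: "vnorm (a \<cdot>\<^sub>v v) = \<bar>a\<bar> * vnorm v"
proof -
  have "(a \<cdot>\<^sub>v v) \<bullet> (a \<cdot>\<^sub>v v) = a^2 * (v \<bullet> v)"
    by (simp add: scalar_prod_def sum_distrib_left power2_eq_square algebra_simps)
  then show ?thesis unfolding vnorm_def by (simp add: real_sqrt_mult)
qed

lemma op_bound:
  fixes X :: "real mat"
  assumes X: "X \<in> carrier_mat r d" and sn: "spec_norm X \<le> 1" and v: "v \<in> carrier_vec d"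
  shows "vnorm (X *\<^sub>v v) \<le> vnorm v"
proof -
  define S where "S = {vnorm (X *\<^sub>v v) | v. v \<in> carrier_vec (dim_col X) \<and> vnorm v \<le> 1}"
  define B where "B = (\<Sum>i = 0..<r. (\<Sum>j = 0..<d. \<bar>X $$ (i, j)\<bar>)^2)"
  have bnd: "vnorm (X *\<^sub>v x) \<le> sqrt B" if x: "x \<in> carrier_vec d" "vnorm x \<le> 1" for x
  proof -
    have "(vnorm (X *\<^sub>v x))^2 = (\<Sum>i = 0..<r. ((X *\<^sub>v x) $ i)^2)"
      unfolding vnorm_sq scalar_prod_def using X by (simp add: power2_eq_square)
    also have "\<dots> \<le> B" unfolding B_def
    proof (intro sum_mono)
      fix i assume i: "i \<in> {0..<r}"
      have "\<bar>(X *\<^sub>v x) $ i\<bar> = \<bar>\<Sum>j = 0..<d. X $$ (i, j) * x $ j\<bar>"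
        using X x i by (auto simp: scalar_prod_def)
      also have "\<dots> \<le> (\<Sum>j = 0..<d. \<bar>X $$ (i, j) * x $ j\<bar>)" by (rule sum_abs)
      also have "\<dots> \<le> (\<Sum>j = 0..<d. \<bar>X $$ (i, j)\<bar>)"
      proof (intro sum_mono)
        fix j assume "j \<in> {0..<d}"
        then have "\<bar>x $ j\<bar> \<le> 1" using vnorm_abs_entry[OF x(1), of j] x(2) by auto
        then show "\<bar>X $$ (i, j) * x $ j\<bar> \<le> \<bar>X $$ (i, j)\<bar>"
          by (simp add: abs_mult mult_left_le)
      qed
      finally show "((X *\<^sub>v x) $ i)^2 \<le> (\<Sum>j = 0..<d. \<bar>X $$ (i, j)\<bar>)^2"
        by (metis abs_ge_zero power2_abs power_mono)
    qed
    finally show ?thesis using vnorm_nonneg by (metis real_le_rsqrt)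
  qed
  have bdd: "bdd_above S" unfolding S_def using bnd X by (auto intro!: bdd_aboveI[of _ "sqrt B"])
  have le1: "vnorm (X *\<^sub>v x) \<le> 1" if x: "x \<in> carrier_vec d" "vnorm x \<le> 1" for x
  proof -
    have "vnorm (X *\<^sub>v x) \<in> S" unfolding S_def using x X by auto
    then have "vnorm (X *\<^sub>v x) \<le> Sup S" using bdd by (rule cSup_upper)
    then show ?thesis using sn unfolding spec_norm_def S_def by simp
  qed
  show ?thesis
  proof (cases "vnorm v = 0")
    case True
    then have "v \<bullet> v = 0" using vnorm_sq by (metis power_zero_numeral)
    then have "\<forall>i\<in>{0..<d}. v $ i * v $ i = 0" using v unfolding scalar_prod_def
      by (subst sum_nonneg_eq_0_iff[symmetric]) auto
    then have "v = 0\<^sub>v d" using v by (intro eq_vecI) auto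
    moreover have "X *\<^sub>v 0\<^sub>v d = 0\<^sub>v r" using X by (intro eq_vecI) (auto simp: scalar_prod_def)
    ultimately show ?thesis using vnorm_nonneg by (simp add: vnorm_def)
  next
    case False
    then have s: "vnorm v > 0" using vnorm_nonneg by (metis less_eq_real_def)
    define x where "x = (1 / vnorm v) \<cdot>\<^sub>v v"
    have x: "x \<in> carrier_vec d" unfolding x_def using v by simp
    have "vnorm x = 1" unfolding x_def vnorm_smult using s by simp
    then have "vnorm (X *\<^sub>v x) \<le> 1" using le1 x by simp
    moreover have "X *\<^sub>v x = (1 / vnorm v) \<cdot>\<^sub>v (X *\<^sub>v v)" unfolding x_def using mult_mat_vec[OF X v] .
    ultimately have "(1 / vnorm v) * vnorm (X *\<^sub>v v) \<le> 1" using s by (simp add: vnorm_smult)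
    then show ?thesis using s by (simp add: field_simps)
  qed
qed


lemma sum_T_minus_m: "(\<Sum>m=1..T. (real T - real m)) = real T * (real T - 1) / 2"
proof -
  have g: "(\<Sum>m=1..T. real m) = real T * (real T + 1) / 2"
    by (induction T) (auto simp: field_simps)
  have "(\<Sum>m=1..T. (real T - real m)) = real T * real T - (\<Sum>m=1..T. real m)"
    by (simp add: sum_subtractf)
  then show ?thesis using g by (simp add: field_simps)
qed

lemma quad_expand:
  fixes x y :: "real vec"
  assumes "x \<in> carrier_vec n" "y \<in> carrier_vec n"
  shows "(x - y) \<bullet> (x - y) = x \<bullet> x - 2 * (x \<bullet> y) + y \<bullet> y"
  using assms unfolding scalar_prod_def
  by (simp add: algebra_simps sum.distrib sum_subtractf sum_distrib_left)

theorem mainTheorem17: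
  fixes d T n k :: nat and Xs :: "nat \<Rightarrow> real mat" and ys :: "nat \<Rightarrow> real vec"
  assumes "d \<ge> 1" and "T \<ge> 1" and "n \<ge> 1" and "k = n * T"
    and "in_S d T Xs ys"
  shows "(1 / real T) * (\<Sum>m=1..T. (vnorm (Xs m *\<^sub>v avg_iterate d T Xs ys n - ys m))\<^sup>2)
           \<le> (real T - 1) / (2 * real n)
       \<and> (real T - 1) / (2 * real n) \<le> (real T)\<^sup>2 / (2 * real k)"
proof -
  note T = assms(2) and nn = assms(3)
  from assms(5) obtain ws where ws: "ws \<in> carrier_vec d" "vnorm ws \<le> 1"
    and ysw: "\<And>m. m \<in> {1..T} \<Longrightarrow> ys m = Xs m *\<^sub>v ws"
    and tasks: "\<And>m. m \<in> {1..T} \<Longrightarrow> is_task d (Xs m) (ys m) \<and> spec_norm (Xs m) \<le> 1"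
    unfolding in_S_def by blast
  define \<tau> where "\<tau> = cyclic T"
  have tau: "\<tau> t \<in> {1..T}" for t
    unfolding \<tau>_def cyclic_def using T by (auto simp: Suc_le_eq)
  define r where "r m = dim_row (Xs m)" for m
  have Xc: "Xs m \<in> carrier_mat (r m) d" if "m \<in> {1..T}" for m
    using tasks[OF that] unfolding is_task_def r_def by auto
  have sn: "spec_norm (Xs m) \<le> 1" if "m \<in> {1..T}" for m using tasks[OF that] by auto
  define P where "P m = pinv (Xs m)" for m
  define Q where "Q m = P m * Xs m" for m
  have Pc: "P m \<in> carrier_mat d (r m)" if "m \<in> {1..T}" for m
    unfolding P_def using pinv_props(1)[OF Xc[OF that]] .
  have Qc: "Q m \<in> carrier_mat d d" if "m \<in> {1..T}" for m
    unfolding Q_def using Pc[OF that] Xc[OF that] by simp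
  have Qs: "transpose_mat (Q m) = Q m" if "m \<in> {1..T}" for m
    unfolding Q_def P_def using pinv_props(5)[OF Xc[OF that]] .
  have QQ: "Q m * Q m = Q m" if "m \<in> {1..T}" for m
  proof -
    note X = Xc[OF that] and Pm = Pc[OF that]
    have PX: "P m * Xs m \<in> carrier_mat d d" using X Pm by simp
    have "Q m * Q m = P m * Xs m * P m * Xs m" unfolding Q_def using assoc_mult_mat[OF PX Pm X] by simp
    also have "P m * Xs m * P m = P m" unfolding P_def using pinv_props(3)[OF X] .
    finally show ?thesis unfolding Q_def .
  qed
  have XQ: "Xs m * Q m = Xs m" if "m \<in> {1..T}" for m
  proof -
    note X = Xc[OF that] and Pm = Pc[OF that]
    have "Xs m * Q m = Xs m * P m * Xs m" unfolding Q_def using assoc_mult_mat[OF X Pm X] by simp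
    then show ?thesis unfolding P_def using pinv_props(2)[OF X] by simp
  qed
  have yc: "ys m \<in> carrier_vec (r m)" if "m \<in> {1..T}" for m
    using ysw[OF that] Xc[OF that] ws by simp
  define w where "w t = iterate d \<tau> Xs ys t" for t
  have wS: "w (Suc t) = w t + P (\<tau> (Suc t)) *\<^sub>v (ys (\<tau> (Suc t)) - Xs (\<tau> (Suc t)) *\<^sub>v w t)" for t
    unfolding w_def P_def by simp
  have wc: "w t \<in> carrier_vec d" for t
  proof (induction t)
    case 0 then show ?case unfolding w_def by simp
  next
    case (Suc t)
    note m = tau[of "Suc t"]
    show ?case unfolding wS using Suc Pc[OF m] Xc[OF m] yc[OF m] by simp
  qed
  define e where "e t = w t - ws" for t
  have ec: "e t \<in> carrier_vec d" for t unfolding e_def using wc ws by simp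
  have dim_e[simp]: "dim_vec (e t) = d" for t using ec[of t] by simp
  have dim_w[simp]: "dim_vec (w t) = d" for t using wc[of t] by simp
  have step: "e (Suc t) = e t - Q (\<tau> (Suc t)) *\<^sub>v e t" for t
  proof -
    define m where "m = \<tau> (Suc t)"
    have m: "m \<in> {1..T}" unfolding m_def by (rule tau)
    note X = Xc[OF m] and Pm = Pc[OF m] and Qm = Qc[OF m]
    have "ys m - Xs m *\<^sub>v w t = Xs m *\<^sub>v (ws - w t)"
      using ysw[OF m] mult_minus_distrib_mat_vec[OF X ws(1) wc] by simp
    then have "P m *\<^sub>v (ys m - Xs m *\<^sub>v w t) = Q m *\<^sub>v (ws - w t)"
      unfolding Q_def using Pm X ws wc by simp
    also have "\<dots> = Q m *\<^sub>v ws - Q m *\<^sub>v w t" using mult_minus_distrib_mat_vec[OF Qm ws(1) wc] .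
    finally have a: "P m *\<^sub>v (ys m - Xs m *\<^sub>v w t) = Q m *\<^sub>v ws - Q m *\<^sub>v w t" .
    have b: "Q m *\<^sub>v e t = Q m *\<^sub>v w t - Q m *\<^sub>v ws"
      unfolding e_def using mult_minus_distrib_mat_vec[OF Qm wc ws(1)] .
    show ?thesis unfolding m_def[symmetric] e_def wS a using b[unfolded e_def] Qm ws wc
      by (intro eq_vecI) auto
  qed
  have K1: "Xs (\<tau> (Suc t)) *\<^sub>v e (Suc t) = 0\<^sub>v (r (\<tau> (Suc t)))" for t
  proof -
    define m where "m = \<tau> (Suc t)"
    have m: "m \<in> {1..T}" unfolding m_def by (rule tau)
    note X = Xc[OF m] and Qm = Qc[OF m]
    have Qe: "Q m *\<^sub>v e t \<in> carrier_vec d" using Qm ec by simp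
    have "Xs m *\<^sub>v e (Suc t) = Xs m *\<^sub>v e t - Xs m *\<^sub>v (Q m *\<^sub>v e t)"
      unfolding step m_def[symmetric] using mult_minus_distrib_mat_vec[OF X ec Qe] .
    also have "Xs m *\<^sub>v (Q m *\<^sub>v e t) = Xs m *\<^sub>v e t"
      using assoc_mult_mat_vec[OF X Qm ec, symmetric] XQ[OF m] by simp
    finally show ?thesis unfolding m_def[symmetric] using X ec by (intro eq_vecI) auto
  qed
  define a where "a t = (vnorm (e t))^2" for t
  have K2: "(vnorm (e (Suc t) - e t))^2 = a t - a (Suc t)" for t
  proof -
    define m where "m = \<tau> (Suc t)"
    have m: "m \<in> {1..T}" unfolding m_def by (rule tau)
    note Qm = Qc[OF m]
    define z where "z = Q m *\<^sub>v e t"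
    have zc: "z \<in> carrier_vec d" unfolding z_def using Qm ec by simp
    have es: "e (Suc t) = e t - z" unfolding z_def m_def step ..
    have zz: "z \<bullet> z = e t \<bullet> z"
    proof -
      have "z \<bullet> z = e t \<bullet> (transpose_mat (Q m) *\<^sub>v z)" unfolding z_def using adj[OF Qm ec] Qm ec by simp
      also have "transpose_mat (Q m) *\<^sub>v z = (Q m * Q m) *\<^sub>v e t" unfolding Qs[OF m] z_def
        using assoc_mult_mat_vec[OF Qm Qm ec] by simp
      finally show ?thesis unfolding QQ[OF m] z_def .
    qed
    have d1: "(e (Suc t) - e t) \<bullet> (e (Suc t) - e t) = z \<bullet> z"
    proof -
      have et: "e t \<in> carrier_vec d" by (rule ec)
      show ?thesis unfolding es using zc et by (simp add: scalar_prod_def)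
    qed
    have "a (Suc t) = e t \<bullet> e t - 2 * (e t \<bullet> z) + z \<bullet> z"
      unfolding a_def vnorm_sq es using quad_expand[OF ec zc] .
    then show ?thesis unfolding vnorm_sq d1 using zz by (simp add: a_def vnorm_sq)
  qed
  have a_nonneg: "0 \<le> a t" for t unfolding a_def by simp
  have a_suc: "a (Suc t) \<le> a t" for t using K2[of t] by (metis diff_ge_0_iff_ge zero_le_power2)
  have a_mono: "a (t + j) \<le> a t" for t j
    by (induction j) (auto intro: order_trans[OF a_suc])
  have G: "(vnorm (Xs (\<tau> t) *\<^sub>v e (t + j)))^2 \<le> real j * (a t - a (t + j))" if t: "t \<ge> 1" for t j
  proof -
    obtain t' where t': "t = Suc t'" using t by (cases t) auto
    define m where "m = \<tau> t"
    have m: "m \<in> {1..T}" unfolding m_def by (rule tau)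
    note X = Xc[OF m]
    have X0: "Xs m *\<^sub>v e t = 0\<^sub>v (r m)" unfolding m_def t' by (rule K1)
    have "Xs m *\<^sub>v (e (t + j) - e t) = Xs m *\<^sub>v e (t + j) - Xs m *\<^sub>v e t"
      using mult_minus_distrib_mat_vec[OF X ec ec] .
    also have "\<dots> = Xs m *\<^sub>v e (t + j)" unfolding X0 using X ec by (intro eq_vecI) auto
    finally have eq: "Xs m *\<^sub>v e (t + j) = Xs m *\<^sub>v (e (t + j) - e t)" by simp
    have dc: "e (t + j) - e t \<in> carrier_vec d" using ec by simp
    have "vnorm (Xs m *\<^sub>v e (t + j)) \<le> vnorm (e (t + j) - e t)"
      unfolding eq by (rule op_bound[OF X sn[OF m] dc])
    then have "(vnorm (Xs m *\<^sub>v e (t + j)))^2 \<le> (vnorm (e (t + j) - e t))^2"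
      using vnorm_nonneg by (intro power_mono) auto
    also have "\<dots> \<le> 1^2 * real (card {..<j}) * (\<Sum>i<j. (vnorm (e (Suc (t + i)) - e (t + i)))^2)"
    proof (rule vec_sum_sq[OF _ dc])
      fix k assume k: "k < d"
      have "(\<Sum>i<j. (e (Suc (t + i)) - e (t + i)) $ k) = (\<Sum>i<j. e (t + Suc i) $ k - e (t + i) $ k)"
        using ec k by (intro sum.cong) auto
      also have "\<dots> = e (t + j) $ k - e (t + 0) $ k"
        by (rule sum_lessThan_telescope[where f = "\<lambda>i. e (t + i) $ k"])
      finally show "(e (t + j) - e t) $ k = 1 * (\<Sum>i<j. (e (Suc (t + i)) - e (t + i)) $ k)"
        using ec k by simp
    qed (use ec in auto)
    also have "(\<Sum>i<j. (vnorm (e (Suc (t + i)) - e (t + i)))^2) = (\<Sum>i<j. a (t + i) - a (Suc (t + i)))"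
      using K2 by simp
    also have "\<dots> = a t - a (t + j)"
      using sum_lessThan_telescope'[where f = "\<lambda>i. a (t + i)" and m = j] by simp
    finally show ?thesis unfolding m_def by simp
  qed
  have tau_eq: "\<tau> (T * q + m) = m" if "m \<in> {1..T}" for q m
  proof -
    have "T * q + m - 1 = (m - 1) + T * q" using that by auto
    then have "(T * q + m - 1) mod T = (m - 1 + T * q) mod T" by simp
    also have "\<dots> = (m - 1) mod T" by simp
    also have "\<dots> = m - 1" using that by (intro mod_less) auto
    finally have "(T * q + m - 1) mod T = m - 1" .
    then show ?thesis unfolding \<tau>_def cyclic_def using that by simp
  qed
  have B: "(vnorm (Xs m *\<^sub>v e (T * Suc q)))^2 \<le> (real T - real m) * (a (T * q) - a (T * Suc q))"
    if m: "m \<in> {1..T}" for m q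
  proof -
    have t1: "T * q + m \<ge> 1" using m by auto
    have eqt: "T * q + m + (T - m) = T * Suc q" using m by auto
    have "(vnorm (Xs m *\<^sub>v e (T * Suc q)))^2 \<le> real (T - m) * (a (T * q + m) - a (T * Suc q))"
      using G[OF t1, of "T - m"] unfolding tau_eq[OF m] eqt .
    also have "\<dots> \<le> real (T - m) * (a (T * q) - a (T * Suc q))"
      using a_mono[of "T * q" m] by (intro mult_left_mono) auto
    finally show ?thesis using m by (simp add: of_nat_diff)
  qed
  define avg where "avg = avg_iterate d T Xs ys n"
  have avgc: "avg \<in> carrier_vec d" unfolding avg_def avg_iterate_def by simp
  have avg_ent: "avg $ i = (1 / real n) * (\<Sum>n'=1..n. w (T * n') $ i)" if "i < d" for i
    unfolding avg_def avg_iterate_def w_def \<tau>_def using that by simp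
  have A: "(vnorm (Xs m *\<^sub>v avg - ys m))^2 \<le> (1 / real n) * (\<Sum>q<n. (vnorm (Xs m *\<^sub>v e (T * Suc q)))^2)"
    if m: "m \<in> {1..T}" for m
  proof -
    note X = Xc[OF m]
    have uc: "Xs m *\<^sub>v avg - ys m \<in> carrier_vec (r m)" using X avgc yc[OF m] by simp
    have "(vnorm (Xs m *\<^sub>v avg - ys m))^2 \<le> (1 / real n)^2 * real (card {..<n}) * (\<Sum>q<n. (vnorm (Xs m *\<^sub>v e (T * Suc q)))^2)"
    proof (rule vec_sum_sq[OF _ uc])
      fix kk assume kk: "kk < r m"
      have rw: "row (Xs m) kk \<in> carrier_vec d" using X kk by simp
      have "(\<Sum>q<n. (Xs m *\<^sub>v e (T * Suc q)) $ kk) = (\<Sum>q<n. \<Sum>i=0..<d. Xs m $$ (kk, i) * (w (T * Suc q) $ i - ws $ i))"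
        using X kk ec wc ws unfolding e_def by (intro sum.cong) (auto simp: scalar_prod_def)
      also have "\<dots> = (\<Sum>i=0..<d. Xs m $$ (kk, i) * (\<Sum>q<n. w (T * Suc q) $ i)) - real n * (\<Sum>i=0..<d. Xs m $$ (kk, i) * ws $ i)"
        by (simp add: algebra_simps sum_subtractf sum_distrib_left sum.swap[of _ "{..<n}"])
      finally have s: "(\<Sum>q<n. (Xs m *\<^sub>v e (T * Suc q)) $ kk) = \<dots>" .
      have "(Xs m *\<^sub>v avg - ys m) $ kk = (\<Sum>i=0..<d. Xs m $$ (kk, i) * avg $ i) - (\<Sum>i=0..<d. Xs m $$ (kk, i) * ws $ i)"
        using X kk avgc ws ysw[OF m] by (simp add: scalar_prod_def)
      also have "(\<Sum>i=0..<d. Xs m $$ (kk, i) * avg $ i) = (1 / real n) * (\<Sum>i=0..<d. Xs m $$ (kk, i) * (\<Sum>q<n. w (T * Suc q) $ i))"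
      proof -
        have "(\<Sum>i=0..<d. Xs m $$ (kk, i) * avg $ i) = (\<Sum>i=0..<d. (1 / real n) * (Xs m $$ (kk, i) * (\<Sum>q<n. w (T * Suc q) $ i)))"
        proof (intro sum.cong refl)
          fix i assume i: "i \<in> {0..<d}"
          have sh: "(\<Sum>n'=1..n. w (T * n') $ i) = (\<Sum>q<n. w (T * Suc q) $ i)"
            using sum_bounds_lt_plus1[of "\<lambda>n'. w (T * n') $ i" n] by simp
          show "Xs m $$ (kk, i) * avg $ i = (1 / real n) * (Xs m $$ (kk, i) * (\<Sum>q<n. w (T * Suc q) $ i))"
            using i sh by (simp add: avg_ent)
        qed
        then show ?thesis by (simp add: sum_distrib_left)
      qed
      finally show "(Xs m *\<^sub>v avg - ys m) $ kk = (1 / real n) * (\<Sum>q<n. (Xs m *\<^sub>v e (T * Suc q)) $ kk)"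
        unfolding s using nn by (simp add: field_simps)
    qed (use X ec in auto)
    then show ?thesis using nn by (simp add: power2_eq_square)
  qed
  have telesc: "(\<Sum>q<n. a (T * q) - a (T * Suc q)) = a 0 - a (T * n)"
    using sum_lessThan_telescope'[where f = "\<lambda>q. a (T * q)" and m = n] by simp
  have a0: "a 0 \<le> 1"
  proof -
    have "e 0 = - ws" unfolding e_def w_def using ws by (intro eq_vecI) auto
    then have "a 0 = ws \<bullet> ws" unfolding a_def vnorm_sq using ws by (simp add: scalar_prod_def)
    then have "a 0 = (vnorm ws)^2" by (simp add: vnorm_sq)
    then show ?thesis using ws(2) vnorm_nonneg[of ws] by (simp add: power_le_one)
  qed
  have "(\<Sum>m=1..T. (vnorm (Xs m *\<^sub>v avg - ys m))\<^sup>2)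
      \<le> (\<Sum>m=1..T. (1 / real n) * (\<Sum>q<n. (real T - real m) * (a (T * q) - a (T * Suc q))))"
    using A B by (intro sum_mono mult_left_mono order_trans[OF A] sum_mono) auto
  also have "\<dots> = (1 / real n) * (a 0 - a (T * n)) * (\<Sum>m=1..T. (real T - real m))"
  proof -
    have "(\<Sum>m=1..T. (1 / real n) * (\<Sum>q<n. (real T - real m) * (a (T * q) - a (T * Suc q))))
        = (\<Sum>m=1..T. (1 / real n) * ((real T - real m) * (a 0 - a (T * n))))"
      by (intro sum.cong refl) (simp only: sum_distrib_left[symmetric] telesc)
    also have "\<dots> = (1 / real n) * (a 0 - a (T * n)) * (\<Sum>m=1..T. (real T - real m))"
      by (simp add: sum_distrib_left sum_distrib_right mult_ac)
    finally show ?thesis .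
  qed
  also have "\<dots> \<le> (1 / real n) * 1 * (\<Sum>m=1..T. (real T - real m))"
    using a0 a_nonneg[of "T * n"] by (intro mult_right_mono mult_left_mono sum_nonneg) auto
  finally have main: "(\<Sum>m=1..T. (vnorm (Xs m *\<^sub>v avg - ys m))\<^sup>2) \<le> (1 / real n) * (real T * (real T - 1) / 2)"
    unfolding sum_T_minus_m by simp
  have "(1 / real T) * (\<Sum>m=1..T. (vnorm (Xs m *\<^sub>v avg - ys m))\<^sup>2) \<le> (1 / real T) * ((1 / real n) * (real T * (real T - 1) / 2))"
    using main T by (intro mult_left_mono) auto
  also have "\<dots> = (real T - 1) / (2 * real n)"
  proof -
    have "real T \<noteq> 0" "real n \<noteq> 0" using T nn by auto
    then show ?thesis by (simp add: field_simps)
  qed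
  finally have c1: "(1 / real T) * (\<Sum>m=1..T. (vnorm (Xs m *\<^sub>v avg - ys m))\<^sup>2) \<le> (real T - 1) / (2 * real n)" .
  have c2: "(real T - 1) / (2 * real n) \<le> (real T)\<^sup>2 / (2 * real k)"
  proof -
    have "(real T)\<^sup>2 / (2 * real k) = real T / (2 * real n)" using assms(4) T nn by (simp add: power2_eq_square)
    then show ?thesis using nn by (simp add: divide_right_mono)
  qed
  show ?thesis using c1 c2 unfolding avg_def by simp
qed

end
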